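(* Let $(M,d)$ be a metric space and let $T:M\to M$ be a surjective mapping such that $$\inf_{n\ge 1}\ \sup_{x\in M} d(T^{n+1}x,T^{n}x)=0.$$ Then $T$ is the identity mapping on $M$.
   Context: $T^n$ denotes the $n$-fold composition of $T$ with itself. *)

theory Defs
  imports "HOL-Analysis.Analysis"
begin

end

theory Submission
  imports Defs
begin

theorem lemma2p1:
  fixes T :: "'a::metric_space \<Rightarrow> 'a"
  assumes "surj T"
    and "(INF n\<in>{1::nat..}. SUP x. ereal (dist ((T ^^ (n+1)) x) ((T ^^ n) x))) = 0"
  shows "T = id"
proof -
  define S where "S = (SUP y. ereal (dist (T y) y))"
  have eq: "(SUP x. ereal (dist ((T ^^ (n+1)) x) ((T ^^ n) x))) = S" for n
  proof -
    have s: "surj (T ^^ n)" using assms(1) by simp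
    have "(SUP x. ereal (dist ((T ^^ (n+1)) x) ((T ^^ n) x)))
        = (SUP x. (\<lambda>y. ereal (dist (T y) y)) ((T ^^ n) x))" by simp
    also have "\<dots> = Sup ((\<lambda>y. ereal (dist (T y) y)) ` range (T ^^ n))"
      by (simp add: image_comp)
    also have "\<dots> = S" using s by (simp add: S_def)
    finally show ?thesis .
  qed
  have "(INF n\<in>{1::nat..}. S) = 0" using assms(2) eq by simp
  hence S0: "S = 0" by simp
  show ?thesis
  proof
    fix y
    have "ereal (dist (T y) y) \<le> S" unfolding S_def by (rule SUP_upper) simp
    hence "dist (T y) y \<le> 0" using S0 by simp
    thus "T y = id y" by simp
  qed
qed

end
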